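(* Let $n\ge1$, $k\ge1$, and $\gamma=((i_1\,j_1),\dots,(i_k\,j_k))\in\Sigma^*_n(k)$. Then: 1. The sequence $(j_1,\dots,j_k)$ has pairwise distinct terms. 2. For all $l\in\{1,\dots,k\}$, $j_l$ is a fixed point of $\gamma_{l-1}$. 3. For all $l\in\{1,\dots,k\}$, $\gamma_l$ is obtained from $\gamma_{l-1}$ by inserting $j_l$ into the cycle of $i_l$ immediately after $i_l$; that is, $\gamma_l(i_l)=j_l$, $\gamma_l(j_l)=\gamma_{l-1}(i_l)$, and $\gamma_l(x)=\gamma_{l-1}(x)$ for $x\notin\{i_l,j_l\}$. 4. For all $m\in\{1,\dots,k\}$, the support of $\gamma_m$ equals $\bigcup_{l=1}^m\{i_l,j_l\}$.
   Context: Let $n\ge1$. $\mathfrak S_n$ is the symmetric group on $\{1,\dots,n\}$; products of permutations are composed from right to left, i.e. $(\sigma\pi)(x)=\sigma(\pi(x))$. $\mathsf T_n$ denotes the set of transpositions; a transposition is always written $(i\,j)$ with $i<j$. For $\sigma\in\mathfrak S_n$, $\ell(\sigma)$ is the number of cycles of $\sigma$ (fixed points counted) and $|\sigma|=n-\ell(\sigma)$. Write $\sigma_1\preccurlyeq\sigma_2$ iff $|\sigma_2|=|\sigma_1|+|\sigma_1^{-1}\sigma_2|$. For $k\ge0$, $\Sigma_n(k)=\{(\tau_1,\dots,\tau_k)\in(\mathsf T_n)^k : |\tau_1\cdots\tau_k|=k,\ \tau_1\cdots\tau_k\preccurlyeq(1\,2\,\dots\,n)\}$, and $\Sigma^*_n(k)$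 is the subset of those $((i_1\,j_1),\dots,(i_k\,j_k))\in\Sigma_n(k)$ with $i_1\le i_2\le\dots\le i_k$. For $\gamma=(\tau_1,\dots,\tau_k)$, $\gamma_l=\tau_1\cdots\tau_l$ for $0\le l\le k$ ($\gamma_0=\mathrm{id}$). The support of a permutation is its set of non-fixed points. *)

theory Defs
  imports "HOL-Combinatorics.Transposition"
begin

(* Permutations of {1..n} are functions nat => nat that permute {1..n}
   (identity outside). Products compose right to left: sigma*pi = sigma o pi. *)

definition cyc :: "nat \<Rightarrow> (nat \<Rightarrow> nat) \<Rightarrow> nat \<Rightarrow> nat set" where
  "cyc n \<sigma> x = {y \<in> {1..n}. \<exists>m. (\<sigma> ^^ m) x = y}"

definition ncycles :: "nat \<Rightarrow> (nat \<Rightarrow> nat) \<Rightarrow> nat" where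
  "ncycles n \<sigma> = card (cyc n \<sigma> ` {1..n})"

definition plen :: "nat \<Rightarrow> (nat \<Rightarrow> nat) \<Rightarrow> nat" where
  "plen n \<sigma> = n - ncycles n \<sigma>"

definition ple :: "nat \<Rightarrow> (nat \<Rightarrow> nat) \<Rightarrow> (nat \<Rightarrow> nat) \<Rightarrow> bool" where
  "ple n \<sigma>1 \<sigma>2 \<longleftrightarrow> plen n \<sigma>2 = plen n \<sigma>1 + plen n (inv \<sigma>1 \<circ> \<sigma>2)"

definition longcyc :: "nat \<Rightarrow> nat \<Rightarrow> nat" where
  "longcyc n x = (if 1 \<le> x \<and> x < n then x + 1 else if x = n \<and> 1 \<le> n then 1 else x)"

definition is_transp :: "nat \<Rightarrow> nat \<times> nat \<Rightarrow> bool" where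
  "is_transp n t \<longleftrightarrow> 1 \<le> fst t \<and> fst t < snd t \<and> snd t \<le> n"

definition tprod :: "(nat \<times> nat) list \<Rightarrow> nat \<Rightarrow> nat" where
  "tprod ts = foldr (\<lambda>t acc. transpose (fst t) (snd t) \<circ> acc) ts id"

definition gam :: "(nat \<times> nat) list \<Rightarrow> nat \<Rightarrow> nat \<Rightarrow> nat" where
  "gam ts l = tprod (take l ts)"

definition Sigma_n :: "nat \<Rightarrow> nat \<Rightarrow> (nat \<times> nat) list set" where
  "Sigma_n n k = {ts. length ts = k \<and> (\<forall>t \<in> set ts. is_transp n t)
      \<and> plen n (tprod ts) = k \<and> ple n (tprod ts) (longcyc n)}"

definition Sigma_star :: "nat \<Rightarrow> nat \<Rightarrow> (nat \<times> nat) list set" where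
  "Sigma_star n k = {ts \<in> Sigma_n n k. sorted (map fst ts)}"

end

theory Submission
  imports Defs "HOL-Combinatorics.Combinatorics"
begin


definition reach :: "(nat \<Rightarrow> nat) \<Rightarrow> nat \<Rightarrow> nat \<Rightarrow> bool" where
  "reach f x y \<longleftrightarrow> (\<exists>m. (f ^^ m) x = y)"

lemma cyc_alt: "cyc n \<sigma> x = {y \<in> {1..n}. reach \<sigma> x y}"
  by (simp add: cyc_def reach_def)

lemma reach_refl[simp]: "reach f x x"
  unfolding reach_def by (metis funpow_0)

lemma reach_step: "reach f x y \<Longrightarrow> reach f x (f y)"
  unfolding reach_def by (metis comp_apply funpow.simps(2))

lemma reach_one: "reach f x (f x)"
  using reach_step[OF reach_refl] .

lemma reach_trans: "reach f x y \<Longrightarrow> reach f y z \<Longrightarrow> reach f x z"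
  unfolding reach_def by (metis funpow_add comp_apply)

lemma funpow_in: "\<sigma> permutes S \<Longrightarrow> x \<in> S \<Longrightarrow> (\<sigma> ^^ m) x \<in> S"
proof (induction m)
  case (Suc m)
  then have "(\<sigma> ^^ m) x \<in> S" by blast
  then show ?case using permutes_in_image[OF Suc.prems(1)] by simp
qed simp

lemma reach_in: "\<sigma> permutes S \<Longrightarrow> x \<in> S \<Longrightarrow> reach \<sigma> x y \<Longrightarrow> y \<in> S"
  unfolding reach_def by (metis funpow_in)

lemma perm_period:
  assumes "\<sigma> permutes {1..(n::nat)}"
  obtains p where "p > 0" "(\<sigma> ^^ p) x = x"
proof -
  have "permutation \<sigma>" using assms permutation_permutes by blast
  then obtain p where "p > 0" "(\<sigma> ^^ p) x = x" by (rule permutation_self)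
  then show ?thesis by (rule that)
qed

lemma funpow_period: "(f ^^ p) x = x \<Longrightarrow> (f ^^ (p * r)) x = x"
  by (induction r) (auto simp: funpow_add)

lemma reach_sym:
  assumes "\<sigma> permutes {1..(n::nat)}" "reach \<sigma> x y"
  shows "reach \<sigma> y x"
proof -
  obtain m where m: "(\<sigma> ^^ m) x = y" using assms(2) reach_def by blast
  obtain p where p: "p > 0" "(\<sigma> ^^ p) x = x" using perm_period[OF assms(1)] by blast
  have "(\<sigma> ^^ ((p - 1) * m)) y = (\<sigma> ^^ ((p - 1) * m + m)) x"
    by (simp add: funpow_add m[symmetric])
  also have "(p - 1) * m + m = p * m" using p(1) by (cases p) auto
  also have "(\<sigma> ^^ (p * m)) x = x" using funpow_period[OF p(2)] .
  finally show ?thesis unfolding reach_def by blast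
qed

lemma cyc_eq_iff:
  assumes "\<sigma> permutes {1..(n::nat)}" "x \<in> {1..n}"
  shows "cyc n \<sigma> x = cyc n \<sigma> y \<longleftrightarrow> reach \<sigma> y x"
proof
  assume e: "cyc n \<sigma> x = cyc n \<sigma> y"
  have "x \<in> cyc n \<sigma> x" using assms(2) by (simp add: cyc_alt)
  then have "x \<in> cyc n \<sigma> y" using e by simp
  then show "reach \<sigma> y x" by (simp add: cyc_alt)
next
  assume h: "reach \<sigma> y x"
  then have "reach \<sigma> x y" using reach_sym assms(1) by blast
  then show "cyc n \<sigma> x = cyc n \<sigma> y" using h by (auto simp: cyc_alt intro: reach_trans)
qed

lemma reach_cong:
  assumes "\<And>m. f ((g ^^ m) x) = g ((g ^^ m) x)"
  shows "(f ^^ m) x = (g ^^ m) x"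
  using assms by (induction m) auto

lemma funpow_agree:
  assumes "\<And>y. reach \<sigma> x y \<Longrightarrow> \<sigma>' y = \<sigma> y"
  shows "(\<sigma>' ^^ m) x = (\<sigma> ^^ m) x"
proof (induction m)
  case (Suc m)
  have "reach \<sigma> x ((\<sigma> ^^ m) x)" unfolding reach_def by blast
  then show ?case using Suc assms by simp
qed simp

lemma cyc_agree:
  assumes "\<And>y. reach \<sigma> x y \<Longrightarrow> \<sigma>' y = \<sigma> y"
  shows "cyc n \<sigma>' x = cyc n \<sigma> x"
  using funpow_agree[OF assms] unfolding cyc_def by simp

definition orbs :: "nat \<Rightarrow> (nat \<Rightarrow> nat) \<Rightarrow> nat set set" where
  "orbs n \<sigma> = cyc n \<sigma> ` {1..n}"

lemma ncycles_orbs: "ncycles n \<sigma> = card (orbs n \<sigma>)"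
  by (simp add: ncycles_def orbs_def)

lemma finite_orbs[simp]: "finite (orbs n \<sigma>)"
  by (simp add: orbs_def)

lemma ncycles_le: "ncycles n \<sigma> \<le> n"
  unfolding ncycles_def using card_image_le[of "{1..n}" "cyc n \<sigma>"] by simp

lemma cyc_self: "x \<in> {1..n} \<Longrightarrow> x \<in> cyc n \<sigma> x"
  by (simp add: cyc_alt)

lemma transpose_perm: "a \<in> {1..n} \<Longrightarrow> b \<in> {1..n} \<Longrightarrow> \<sigma> permutes {1..n} \<Longrightarrow> \<sigma> \<circ> transpose a b permutes {1..(n::nat)}"
  by (simp add: permutes_compose permutes_swap_id)

lemma orbit_keep:
  assumes P: "\<sigma> permutes {1..(n::nat)}" and x: "x \<in> {1..n}" and a: "a \<in> {1..n}" and b: "b \<in> {1..n}"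
    and ne: "cyc n \<sigma> x \<noteq> cyc n \<sigma> a" "cyc n \<sigma> x \<noteq> cyc n \<sigma> b"
  shows "cyc n (\<sigma> \<circ> transpose a b) x = cyc n \<sigma> x"
proof (rule cyc_agree)
  fix y assume r: "reach \<sigma> x y"
  have "y \<noteq> a"
  proof
    assume "y = a"
    then have "cyc n \<sigma> a = cyc n \<sigma> x" using cyc_eq_iff[OF P a, of x] r by simp
    then show False using ne by simp
  qed
  moreover have "y \<noteq> b"
  proof
    assume "y = b"
    then have "cyc n \<sigma> b = cyc n \<sigma> x" using cyc_eq_iff[OF P b, of x] r by simp
    then show False using ne by simp
  qed
  ultimately show "(\<sigma> \<circ> transpose a b) y = \<sigma> y" by (simp add: transpose_def)
qed

lemma split_separates:
  assumes P: "\<sigma> permutes {1..(n::nat)}" and ab: "a \<noteq> b" and r: "reach \<sigma> b a"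
  shows "\<not> reach (\<sigma> \<circ> transpose a b) a b"
proof -
  define \<sigma>' where "\<sigma>' = \<sigma> \<circ> transpose a b"
  obtain m where m: "(\<sigma> ^^ m) b = a" using r reach_def by blast
  then have m0: "m > 0" using ab by (cases m) auto
  define d where "d = (LEAST m. m > 0 \<and> (\<sigma> ^^ m) b = a)"
  have d: "d > 0" "(\<sigma> ^^ d) b = a"
    using LeastI[of "\<lambda>m. m > 0 \<and> (\<sigma> ^^ m) b = a", OF conjI[OF m0 m]] d_def by auto
  have dmin: "(\<sigma> ^^ s) b \<noteq> a" if "0 < s" "s < d" for s
    using not_less_Least[of s "\<lambda>m. m > 0 \<and> (\<sigma> ^^ m) b = a"] that d_def by auto
  have dnb: "(\<sigma> ^^ s) b \<noteq> b" if "0 < s" "s < d" for s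
  proof
    assume e: "(\<sigma> ^^ s) b = b"
    have "(\<sigma> ^^ (d - s)) ((\<sigma> ^^ s) b) = (\<sigma> ^^ d) b"
    proof -
      have "(\<sigma> ^^ (d - s)) ((\<sigma> ^^ s) b) = (\<sigma> ^^ (d - s + s)) b" by (simp add: funpow_add)
      then show ?thesis using that by simp
    qed
    then have "(\<sigma> ^^ (d - s)) b = a" using e d by simp
    then show False using dmin[of "d - s"] that by simp
  qed
  define T where "T = {y. \<exists>s. 1 \<le> s \<and> s \<le> d \<and> y = (\<sigma> ^^ s) b}"
  have aT: "a \<in> T" unfolding T_def using d by (intro CollectI exI[of _ d]) auto
  have bT: "b \<notin> T"
  proof
    assume "b \<in> T"
    then obtain s where s: "1 \<le> s" "s \<le> d" "b = (\<sigma> ^^ s) b" unfolding T_def by blast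
    show False
    proof (cases "s = d")
      case True then show ?thesis using s d ab by simp
    next
      case False then show ?thesis using s dnb[of s] by simp
    qed
  qed
  have Tinv: "\<sigma>' y \<in> T" if "y \<in> T" for y
  proof -
    obtain s where s: "1 \<le> s" "s \<le> d" "y = (\<sigma> ^^ s) b" using \<open>y \<in> T\<close> unfolding T_def by blast
    show ?thesis
    proof (cases "s = d")
      case True
      then have "y = a" using s d by simp
      then have "\<sigma>' y = (\<sigma> ^^ 1) b" by (simp add: \<sigma>'_def)
      then show ?thesis unfolding T_def using d by (intro CollectI exI[of _ 1]) auto
    next
      case False
      then have "y \<noteq> a" "y \<noteq> b" using s dmin[of s] dnb[of s] by auto
      then have "\<sigma>' y = (\<sigma> ^^ Suc s) b" using s by (simp add: \<sigma>'_def transpose_def)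
      then show ?thesis unfolding T_def using s False by (intro CollectI exI[of _ "Suc s"]) auto
    qed
  qed
  have "(\<sigma>' ^^ k) a \<in> T" for k
    by (induction k) (use aT Tinv in auto)
  then show ?thesis using bT unfolding reach_def \<sigma>'_def by metis
qed

lemma in_cyc_eq:
  assumes P: "\<sigma> permutes {1..(n::nat)}" and y: "y \<in> cyc n \<sigma> z"
  shows "cyc n \<sigma> y = cyc n \<sigma> z"
proof -
  have "y \<in> {1..n}" "reach \<sigma> z y" using y by (auto simp: cyc_alt)
  then show ?thesis using cyc_eq_iff[OF P, of y z] by simp
qed

lemma split_ge:
  assumes P: "\<sigma> permutes {1..(n::nat)}" and a: "a \<in> {1..n}" and b: "b \<in> {1..n}"
    and ab: "a \<noteq> b" and r: "reach \<sigma> b a"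
  shows "ncycles n \<sigma> + 1 \<le> ncycles n (\<sigma> \<circ> transpose a b)"
proof -
  define \<sigma>' where "\<sigma>' = \<sigma> \<circ> transpose a b"
  have P': "\<sigma>' permutes {1..n}" unfolding \<sigma>'_def using transpose_perm[OF a b P] .
  define C where "C = cyc n \<sigma> a"
  have Cb: "cyc n \<sigma> b = C" using cyc_eq_iff[OF P a, of b] r C_def by simp
  have C: "C \<in> orbs n \<sigma>" using a C_def orbs_def by auto
  have sub: "orbs n \<sigma> - {C} \<subseteq> orbs n \<sigma>'"
  proof
    fix D assume "D \<in> orbs n \<sigma> - {C}"
    then have D: "D \<in> orbs n \<sigma>" "D \<noteq> C" by auto
    then obtain x where x: "x \<in> {1..n}" "D = cyc n \<sigma> x" unfolding orbs_def by blast
    then have "cyc n \<sigma>' x = D" using orbit_keep[OF P x(1) a b] Cb C_def \<sigma>'_def D(2) by simp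
    then show "D \<in> orbs n \<sigma>'" using x(1) unfolding orbs_def by blast
  qed
  have ins: "cyc n \<sigma>' a \<in> orbs n \<sigma>'" "cyc n \<sigma>' b \<in> orbs n \<sigma>'" using a b orbs_def by auto
  have neq: "cyc n \<sigma>' a \<noteq> cyc n \<sigma>' b"
    using cyc_eq_iff[OF P' a, of b] split_separates[OF P ab r] reach_sym[OF P'] \<sigma>'_def by metis
  have nin: "cyc n \<sigma>' y \<notin> orbs n \<sigma> - {C}" if y: "y \<in> {a, b}" for y
  proof
    assume h: "cyc n \<sigma>' y \<in> orbs n \<sigma> - {C}"
    then obtain z where z: "z \<in> {1..n}" "cyc n \<sigma>' y = cyc n \<sigma> z" unfolding orbs_def by blast
    have z3: "cyc n \<sigma> z \<noteq> C" using h z(2) by simp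
    have "y \<in> {1..n}" using y a b by auto
    then have "y \<in> cyc n \<sigma> z" using z(2) cyc_self[of y n \<sigma>'] by simp
    then have "cyc n \<sigma> y = cyc n \<sigma> z" using in_cyc_eq[OF P] by blast
    then show False using z3 y Cb C_def by auto
  qed
  have "(orbs n \<sigma> - {C}) \<union> {cyc n \<sigma>' a, cyc n \<sigma>' b} \<subseteq> orbs n \<sigma>'" using sub ins by blast
  then have "card ((orbs n \<sigma> - {C}) \<union> {cyc n \<sigma>' a, cyc n \<sigma>' b}) \<le> card (orbs n \<sigma>')"
    by (intro card_mono) auto
  moreover have "card ((orbs n \<sigma> - {C}) \<union> {cyc n \<sigma>' a, cyc n \<sigma>' b}) = card (orbs n \<sigma> - {C}) + 2"
    using nin neq by (subst card_Un_disjoint) auto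
  moreover have "card (orbs n \<sigma> - {C}) + 1 = card (orbs n \<sigma>)"
    using card.remove[OF finite_orbs C] by simp
  ultimately show ?thesis unfolding ncycles_orbs \<sigma>'_def by linarith
qed

lemma reach_after_merge:
  assumes P: "\<sigma> permutes {1..(n::nat)}" and ab: "a \<noteq> b" and r: "\<not> reach \<sigma> b a"
  shows "reach (\<sigma> \<circ> transpose a b) a b"
proof -
  define \<sigma>' where "\<sigma>' = \<sigma> \<circ> transpose a b"
  obtain p0 where p0: "p0 > 0" "(\<sigma> ^^ p0) b = b" using perm_period[OF P] by blast
  define p where "p = (LEAST m. m > 0 \<and> (\<sigma> ^^ m) b = b)"
  have p: "p > 0" "(\<sigma> ^^ p) b = b"
    using LeastI[of "\<lambda>m. m > 0 \<and> (\<sigma> ^^ m) b = b", OF conjI[OF p0]] p_def by auto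
  have pmin: "(\<sigma> ^^ s) b \<noteq> b" if "0 < s" "s < p" for s
    using not_less_Least[of s "\<lambda>m. m > 0 \<and> (\<sigma> ^^ m) b = b"] that p_def by auto
  have na: "(\<sigma> ^^ s) b \<noteq> a" for s using r unfolding reach_def by blast
  have "1 \<le> s \<Longrightarrow> s \<le> p \<Longrightarrow> (\<sigma>' ^^ s) a = (\<sigma> ^^ s) b" for s
  proof (induction s)
    case 0 then show ?case by simp
  next
    case (Suc s)
    show ?case
    proof (cases "s = 0")
      case True then show ?thesis by (simp add: \<sigma>'_def)
    next
      case False
      then have IH: "(\<sigma>' ^^ s) a = (\<sigma> ^^ s) b" using Suc by simp
      have "(\<sigma> ^^ s) b \<noteq> b" using pmin[of s] False Suc.prems by simp
      have "(\<sigma>' ^^ Suc s) a = \<sigma>' ((\<sigma> ^^ s) b)" using IH by simp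
      also have "\<dots> = \<sigma> ((\<sigma> ^^ s) b)" using na[of s] \<open>(\<sigma> ^^ s) b \<noteq> b\<close> by (simp add: \<sigma>'_def)
      also have "\<dots> = (\<sigma> ^^ Suc s) b" by simp
      finally show ?thesis .
    qed
  qed
  then have "(\<sigma>' ^^ p) a = b" using p by simp
  then show ?thesis unfolding reach_def \<sigma>'_def by blast
qed

lemma merge_le:
  assumes P: "\<sigma> permutes {1..(n::nat)}" and a: "a \<in> {1..n}" and b: "b \<in> {1..n}"
    and ab: "a \<noteq> b" and r: "\<not> reach \<sigma> b a"
  shows "ncycles n (\<sigma> \<circ> transpose a b) + 1 \<le> ncycles n \<sigma>"
proof -
  define \<sigma>' where "\<sigma>' = \<sigma> \<circ> transpose a b"
  have P': "\<sigma>' permutes {1..n}" unfolding \<sigma>'_def using transpose_perm[OF a b P] .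
  have "reach \<sigma>' a b" using reach_after_merge[OF P ab r] \<sigma>'_def by simp
  then have "reach \<sigma>' b a" using reach_sym[OF P'] by blast
  from split_ge[OF P' a b ab this] have "ncycles n \<sigma>' + 1 \<le> ncycles n (\<sigma>' \<circ> transpose a b)" .
  moreover have "\<sigma>' \<circ> transpose a b = \<sigma>" unfolding \<sigma>'_def by (simp add: comp_assoc)
  ultimately show ?thesis using \<sigma>'_def by simp
qed

lemma general_ge:
  assumes P: "\<sigma> permutes {1..(n::nat)}" and a: "a \<in> {1..n}" and b: "b \<in> {1..n}" and ab: "a \<noteq> b"
  shows "ncycles n \<sigma> \<le> ncycles n (\<sigma> \<circ> transpose a b) + 1"
proof (cases "reach \<sigma> b a")
  case True then show ?thesis using split_ge[OF P a b ab] by simp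
next
  case False
  define \<sigma>' where "\<sigma>' = \<sigma> \<circ> transpose a b"
  define Q where "Q = {cyc n \<sigma> a, cyc n \<sigma> b}"
  have sub: "orbs n \<sigma> - Q \<subseteq> orbs n \<sigma>'"
  proof
    fix D assume "D \<in> orbs n \<sigma> - Q"
    then have D: "D \<in> orbs n \<sigma>" "D \<notin> Q" by auto
    then obtain x where x: "x \<in> {1..n}" "D = cyc n \<sigma> x" unfolding orbs_def by blast
    then have "cyc n \<sigma>' x = D" using orbit_keep[OF P x(1) a b] Q_def \<sigma>'_def D(2) by simp
    then show "D \<in> orbs n \<sigma>'" using x(1) unfolding orbs_def by blast
  qed
  have ins: "cyc n \<sigma>' a \<in> orbs n \<sigma>'" using a orbs_def by auto
  have nin: "cyc n \<sigma>' a \<notin> orbs n \<sigma> - Q"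
  proof
    assume h: "cyc n \<sigma>' a \<in> orbs n \<sigma> - Q"
    then obtain z where z: "z \<in> {1..n}" "cyc n \<sigma>' a = cyc n \<sigma> z" unfolding orbs_def by blast
    have z3: "cyc n \<sigma> z \<notin> Q" using h z(2) by simp
    have "a \<in> cyc n \<sigma> z" using cyc_self[OF a, of \<sigma>'] z(2) by simp
    then have "cyc n \<sigma> a = cyc n \<sigma> z" using in_cyc_eq[OF P] by blast
    then show False using z3 Q_def by auto
  qed
  have "insert (cyc n \<sigma>' a) (orbs n \<sigma> - Q) \<subseteq> orbs n \<sigma>'" using sub ins by blast
  then have "card (insert (cyc n \<sigma>' a) (orbs n \<sigma> - Q)) \<le> card (orbs n \<sigma>')"
    by (intro card_mono) auto
  moreover have "card (insert (cyc n \<sigma>' a) (orbs n \<sigma> - Q)) = card (orbs n \<sigma> - Q) + 1"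
    using nin by simp
  moreover have "card (orbs n \<sigma>) - card Q \<le> card (orbs n \<sigma> - Q)"
    by (rule diff_card_le_card_Diff) (simp add: Q_def)
  moreover have "card Q \<le> 2" unfolding Q_def by (simp add: card_insert_le_m1)
  moreover have "ncycles n \<sigma> \<ge> card Q"
  proof -
    have "Q \<subseteq> orbs n \<sigma>" using a b Q_def orbs_def by auto
    then show ?thesis unfolding ncycles_orbs by (intro card_mono) auto
  qed
  moreover have "card Q = 2"
  proof -
    have "cyc n \<sigma> a \<noteq> cyc n \<sigma> b" using cyc_eq_iff[OF P a, of b] False by simp
    then show ?thesis unfolding Q_def by simp
  qed
  ultimately show ?thesis unfolding ncycles_orbs \<sigma>'_def by linarith
qed



lemma plen_right_le:
  assumes P: "\<sigma> permutes {1..(n::nat)}" and a: "a \<in> {1..n}" and b: "b \<in> {1..n}" and ab: "a \<noteq> b"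
  shows "plen n (\<sigma> \<circ> transpose a b) \<le> plen n \<sigma> + 1"
  using general_ge[OF P a b ab] ncycles_le[of n \<sigma>] ncycles_le[of n "\<sigma> \<circ> transpose a b"]
  unfolding plen_def by linarith

lemma plen_right_split:
  assumes P: "\<sigma> permutes {1..(n::nat)}" and a: "a \<in> {1..n}" and b: "b \<in> {1..n}" and ab: "a \<noteq> b"
    and r: "reach \<sigma> b a"
  shows "plen n (\<sigma> \<circ> transpose a b) + 1 \<le> plen n \<sigma>"
  using split_ge[OF P a b ab r] ncycles_le[of n \<sigma>] ncycles_le[of n "\<sigma> \<circ> transpose a b"]
  unfolding plen_def by linarith

lemma plen_right_merge:
  assumes P: "\<sigma> permutes {1..(n::nat)}" and a: "a \<in> {1..n}" and b: "b \<in> {1..n}" and ab: "a \<noteq> b"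
    and r: "\<not> reach \<sigma> b a"
  shows "plen n (\<sigma> \<circ> transpose a b) = plen n \<sigma> + 1"
  using general_ge[OF P a b ab] merge_le[OF P a b ab r] ncycles_le[of n \<sigma>] ncycles_le[of n "\<sigma> \<circ> transpose a b"]
  unfolding plen_def by linarith

lemma funpow_inv_comm:
  assumes P: "\<sigma> permutes S"
  shows "(\<sigma> ^^ m) (inv \<sigma> x) = inv \<sigma> ((\<sigma> ^^ m) x)"
proof (induction m)
  case (Suc m)
  have "(\<sigma> ^^ Suc m) (inv \<sigma> x) = \<sigma> (inv \<sigma> ((\<sigma> ^^ m) x))" using Suc by simp
  also have "\<dots> = (\<sigma> ^^ m) x" using permutes_inverses(1)[OF P] by simp
  also have "\<dots> = inv \<sigma> ((\<sigma> ^^ Suc m) x)" using permutes_inverses(2)[OF P] by simp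
  finally show ?case .
qed simp

lemma reach_inv_iff:
  assumes P: "\<sigma> permutes S"
  shows "reach \<sigma> (inv \<sigma> b) (inv \<sigma> a) \<longleftrightarrow> reach \<sigma> b a"
proof -
  have "inj (inv \<sigma>)" using permutes_inv[OF P] permutes_inj by blast
  then have "(\<sigma> ^^ m) (inv \<sigma> b) = inv \<sigma> a \<longleftrightarrow> (\<sigma> ^^ m) b = a" for m
    using funpow_inv_comm[OF P] by (simp add: inj_eq)
  then show ?thesis unfolding reach_def by simp
qed

lemma left_conv:
  assumes P: "\<sigma> permutes S"
  shows "transpose a b \<circ> \<sigma> = \<sigma> \<circ> transpose (inv \<sigma> a) (inv \<sigma> b)"
  using transpose_comp_eq[of \<sigma> a b] permutes_bij[OF P] by simp

lemma inv_in:
  assumes P: "\<sigma> permutes S" and "a \<in> S" shows "inv \<sigma> a \<in> S"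
  using permutes_in_image[OF permutes_inv[OF P]] assms(2) by simp

lemma plen_left_le:
  assumes P: "\<sigma> permutes {1..(n::nat)}" and a: "a \<in> {1..n}" and b: "b \<in> {1..n}" and ab: "a \<noteq> b"
  shows "plen n (transpose a b \<circ> \<sigma>) \<le> plen n \<sigma> + 1"
proof -
  have "inv \<sigma> a \<noteq> inv \<sigma> b" using ab permutes_inverses(1)[OF P] by metis
  then show ?thesis using plen_right_le[OF P inv_in[OF P a] inv_in[OF P b]] left_conv[OF P] by simp
qed

lemma plen_left_merge:
  assumes P: "\<sigma> permutes {1..(n::nat)}" and a: "a \<in> {1..n}" and b: "b \<in> {1..n}" and ab: "a \<noteq> b"
    and r: "\<not> reach \<sigma> b a"
  shows "plen n (transpose a b \<circ> \<sigma>) = plen n \<sigma> + 1"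
proof -
  have "inv \<sigma> a \<noteq> inv \<sigma> b" using ab permutes_inverses(1)[OF P] by metis
  moreover have "\<not> reach \<sigma> (inv \<sigma> b) (inv \<sigma> a)" using reach_inv_iff[OF P] r by simp
  ultimately show ?thesis using plen_right_merge[OF P inv_in[OF P a] inv_in[OF P b]] left_conv[OF P] by simp
qed

lemma ncycles_id: "ncycles n id = n"
proof -
  have "cyc n id x = {x}" if "x \<in> {1..n}" for x
    using that unfolding cyc_alt reach_def by auto
  then have "cyc n id ` {1..n} = (\<lambda>x. {x}) ` {1..n}" by auto
  moreover have "card ((\<lambda>x. {x}) ` {1..n}) = n" by (subst card_image) (auto simp: inj_on_def)
  ultimately show ?thesis unfolding ncycles_def by simp
qed

lemma plen_id[simp]: "plen n id = 0"
  by (simp add: plen_def ncycles_id)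

definition transps :: "nat \<Rightarrow> (nat \<times> nat) list \<Rightarrow> bool" where
  "transps n ts \<longleftrightarrow> (\<forall>t \<in> set ts. is_transp n t)"

lemma tprod_Cons: "tprod (t # ts) = transpose (fst t) (snd t) \<circ> tprod ts"
  by (simp add: tprod_def)

lemma tprod_Nil[simp]: "tprod [] = id"
  by (simp add: tprod_def)

lemma foldr_comp: "foldr (\<lambda>t acc. transpose (fst t) (snd t) \<circ> acc) xs z = tprod xs \<circ> z"
  by (induction xs) (auto simp: tprod_def comp_assoc)

lemma tprod_append: "tprod (xs @ ys) = tprod xs \<circ> tprod ys"
proof -
  have "tprod (xs @ ys) = foldr (\<lambda>t acc. transpose (fst t) (snd t) \<circ> acc) xs (tprod ys)"
    unfolding tprod_def by (rule foldr_append)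
  also have "\<dots> = tprod xs \<circ> tprod ys" by (rule foldr_comp)
  finally show ?thesis .
qed

lemma is_transp_in: "is_transp n t \<Longrightarrow> fst t \<in> {1..n} \<and> snd t \<in> {1..n} \<and> fst t \<noteq> snd t"
  by (auto simp: is_transp_def)

lemma tprod_perm: "\<forall>t \<in> set ts. is_transp n t \<Longrightarrow> tprod ts permutes {1..n}"
proof (induction ts)
  case (Cons t ts)
  have "transpose (fst t) (snd t) permutes {1..n}" using is_transp_in[of n t] Cons.prems
    by (intro permutes_swap_id) auto
  moreover have "tprod ts permutes {1..n}" using Cons by simp
  ultimately show ?case unfolding tprod_Cons by (rule permutes_compose[rotated])
qed (simp add: permutes_id)

lemma plen_tprod_left:
  assumes "\<forall>t \<in> set ts. is_transp n t" and P: "\<sigma> permutes {1..n}"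
  shows "plen n (tprod ts \<circ> \<sigma>) \<le> length ts + plen n \<sigma>"
  using assms(1)
proof (induction ts)
  case (Cons t ts)
  have Q: "tprod ts \<circ> \<sigma> permutes {1..n}" using tprod_perm[of ts n] Cons.prems P by (simp add: permutes_compose)
  have "plen n (tprod (t # ts) \<circ> \<sigma>) = plen n (transpose (fst t) (snd t) \<circ> (tprod ts \<circ> \<sigma>))"
    by (simp add: tprod_Cons comp_assoc)
  also have "\<dots> \<le> plen n (tprod ts \<circ> \<sigma>) + 1"
    using is_transp_in[of n t] Cons.prems by (intro plen_left_le[OF Q]) auto
  moreover have "plen n (tprod ts \<circ> \<sigma>) \<le> length ts + plen n \<sigma>" using Cons.IH Cons.prems by (simp add: comp_def)
  ultimately show ?case unfolding length_Cons by linarith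
qed simp

lemma plen_tprod_right:
  assumes "\<forall>t \<in> set ts. is_transp n t" and P: "\<sigma> permutes {1..n}"
  shows "plen n (\<sigma> \<circ> tprod ts) \<le> plen n \<sigma> + length ts"
  using assms
proof (induction ts arbitrary: \<sigma>)
  case (Cons t ts)
  have Q: "\<sigma> \<circ> transpose (fst t) (snd t) permutes {1..n}"
    using is_transp_in[of n t] Cons.prems by (intro transpose_perm) auto
  have "plen n (\<sigma> \<circ> tprod (t # ts)) = plen n ((\<sigma> \<circ> transpose (fst t) (snd t)) \<circ> tprod ts)"
    by (simp add: tprod_Cons comp_assoc)
  also have "\<dots> \<le> plen n (\<sigma> \<circ> transpose (fst t) (snd t)) + length ts"
  proof -
    have "\<forall>a\<in>set ts. is_transp n a" using Cons.prems by simp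
    then show ?thesis by (rule Cons.IH[OF _ Q])
  qed
  finally have 1: "plen n (\<sigma> \<circ> tprod (t # ts)) \<le> plen n (\<sigma> \<circ> transpose (fst t) (snd t)) + length ts" .
  have "plen n (\<sigma> \<circ> transpose (fst t) (snd t)) \<le> plen n \<sigma> + 1"
    using is_transp_in[of n t] Cons.prems by (intro plen_right_le) auto
  then show ?case using 1 unfolding length_Cons by linarith
qed simp

lemma triangle:
  assumes "\<sigma> permutes {1..(n::nat)}" "\<pi> permutes {1..n}"
  shows "plen n (\<sigma> \<circ> \<pi>) \<le> plen n \<sigma> + plen n \<pi>"
  using assms
proof (induction "plen n \<pi>" arbitrary: \<pi> \<sigma> rule: less_induct)
  case less
  show ?case
  proof (cases "\<forall>x. \<pi> x = x")
    case True
    then have "\<pi> = id" by auto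
    then show ?thesis by simp
  next
    case False
    then obtain x where x: "\<pi> x \<noteq> x" by blast
    then have xS: "x \<in> {1..n}" using permutes_not_in[OF less.prems(2)] by blast
    then have pxS: "\<pi> x \<in> {1..n}" using permutes_in_image[OF less.prems(2)] by simp
    define \<pi>' where "\<pi>' = \<pi> \<circ> transpose (\<pi> x) x"
    have r: "reach \<pi> x (\<pi> x)" by (rule reach_one)
    have sp: "plen n \<pi>' + 1 \<le> plen n \<pi>"
      unfolding \<pi>'_def using plen_right_split[OF less.prems(2) pxS xS x r] .
    have P': "\<pi>' permutes {1..n}" unfolding \<pi>'_def using transpose_perm[OF pxS xS less.prems(2)] .
    have Q: "\<sigma> \<circ> \<pi>' permutes {1..n}" using P' less.prems(1) by (simp add: permutes_compose)
    have e: "\<sigma> \<circ> \<pi> = (\<sigma> \<circ> \<pi>') \<circ> transpose (\<pi> x) x" unfolding \<pi>'_def by (simp add: comp_assoc)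
    have "plen n (\<sigma> \<circ> \<pi>) \<le> plen n (\<sigma> \<circ> \<pi>') + 1"
      unfolding e using plen_right_le[OF Q pxS xS x] .
    also have "plen n (\<sigma> \<circ> \<pi>') \<le> plen n \<sigma> + plen n \<pi>'"
      using less.hyps[of \<pi>' \<sigma>] sp P' less.prems(1) by simp
    finally show ?thesis using sp by simp
  qed
qed

lemma gam_Suc:
  assumes "l < length ts"
  shows "gam ts (Suc l) = gam ts l \<circ> transpose (fst (ts ! l)) (snd (ts ! l))"
  using assms unfolding gam_def take_Suc_conv_app_nth[OF assms] tprod_append
  by (simp add: tprod_def)

lemma gam_drop: "tprod ts = gam ts l \<circ> tprod (drop l ts)"
  unfolding gam_def by (metis append_take_drop_id tprod_append)

lemma gam_0[simp]: "gam ts 0 = id" by (simp add: gam_def)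



definition cint :: "nat \<Rightarrow> nat \<Rightarrow> nat \<Rightarrow> nat set" where
  "cint n u w = {z \<in> {1..n}. if u < w then u < z \<and> z < w else u < z \<or> z < w}"

definition NCat :: "nat \<Rightarrow> (nat \<Rightarrow> nat) \<Rightarrow> nat \<Rightarrow> bool" where
  "NCat n \<sigma> u \<longleftrightarrow> (\<forall>z \<in> cint n u (\<sigma> u). \<sigma> z \<in> cint n u (\<sigma> u))"

lemma longcyc_in: "x \<in> {1..n} \<Longrightarrow> longcyc n x \<in> {1..n}"
  by (auto simp: longcyc_def)

lemma longcyc_perm: "longcyc n permutes {1..n}"
proof (rule bij_imp_permutes)
  have inj: "inj_on (longcyc n) {1..n}"
    by (auto simp: inj_on_def longcyc_def split: if_splits)
  moreover have "longcyc n ` {1..n} = {1..n}"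
    by (rule endo_inj_surj) (use inj longcyc_in in auto)
  ultimately show "bij_betw (longcyc n) {1..n} {1..n}" by (simp add: bij_betw_def)
next
  show "\<And>x. x \<notin> {1..n} \<Longrightarrow> longcyc n x = x" by (auto simp: longcyc_def)
qed

lemma rho_perm: "\<sigma> permutes {1..n} \<Longrightarrow> inv \<sigma> \<circ> longcyc n permutes {1..n}"
  by (intro permutes_compose longcyc_perm permutes_inv)

lemma cint_arith:
  assumes "x \<in> insert u (cint n u w)" "u \<in> {1..n}" "w \<in> {1..n}" "u \<noteq> w" "longcyc n x \<noteq> w"
  shows "longcyc n x \<in> cint n u w"
  using assms by (auto simp: cint_def longcyc_def split: if_splits)

lemma G_inv:
  assumes P: "\<sigma> permutes {1..n}" and u: "u \<in> {1..n}" and nf: "\<sigma> u \<noteq> u" and NC: "NCat n \<sigma> u"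
    and x: "x \<in> insert u (cint n u (\<sigma> u))"
  shows "(inv \<sigma> \<circ> longcyc n) x \<in> insert u (cint n u (\<sigma> u))"
proof -
  define w where "w = \<sigma> u"
  have w: "w \<in> {1..n}" using permutes_in_image[OF P] u w_def by simp
  show ?thesis
  proof (cases "longcyc n x = w")
    case True
    then have "(inv \<sigma> \<circ> longcyc n) x = u" using permutes_inverses(2)[OF P] w_def by simp
    then show ?thesis by simp
  next
    case False
    define I where "I = cint n u w"
    have cx: "longcyc n x \<in> I" using cint_arith[OF _ u w _ False] x nf w_def I_def by auto
    have "\<sigma> ` I = I"
    proof (rule endo_inj_surj)
      show "finite I" by (simp add: I_def cint_def)
      show "\<sigma> ` I \<subseteq> I" using NC unfolding NCat_def I_def w_def by auto
      show "inj_on \<sigma> I" by (rule inj_on_subset[OF permutes_inj[OF P] subset_UNIV])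
    qed
    then obtain z where z: "z \<in> I" "\<sigma> z = longcyc n x" using cx by (metis imageE)
    then have "(inv \<sigma> \<circ> longcyc n) x = z" using permutes_inverses(2)[OF P] by (metis comp_apply)
    then show ?thesis using z I_def w_def by simp
  qed
qed

lemma invariant_reach:
  assumes P: "f permutes {1..(n::nat)}" and GS: "G \<subseteq> {1..n}" and inv: "\<And>x. x \<in> G \<Longrightarrow> f x \<in> G"
    and a: "a \<in> {1..n}" and r: "reach f a b"
  shows "a \<in> G \<longleftrightarrow> b \<in> G"
proof -
  have fG: "f ` G = G"
  proof (rule endo_inj_surj)
    show "finite G" using GS finite_subset by blast
    show "f ` G \<subseteq> G" using inv by auto
    show "inj_on f G" by (rule inj_on_subset[OF permutes_inj[OF P] subset_UNIV])
  qed
  have out: "f x \<notin> G" if "x \<in> {1..n}" "x \<notin> G" for x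
  proof
    assume "f x \<in> G"
    then obtain g where "g \<in> G" "f g = f x" using fG by (metis imageE)
    then show False using permutes_inj[OF P] that by (metis injD)
  qed
  obtain m where m: "(f ^^ m) a = b" using r reach_def by blast
  have 1: "(f ^^ m) a \<in> G" if "a \<in> G" for m using that by (induction m) (auto intro: inv)
  have 2: "(f ^^ m) a \<in> {1..n} - G" if "a \<notin> G" for m
    using that a
  proof (induction m)
    case (Suc m)
    then have "(f ^^ m) a \<in> {1..n}" "(f ^^ m) a \<notin> G" by auto
    then show ?case using out permutes_in_image[OF P] by simp
  qed simp
  show ?thesis using 1 2 m by blast
qed

lemma G_iff:
  assumes P: "\<sigma> permutes {1..n}" and u: "u \<in> {1..n}" and nf: "\<sigma> u \<noteq> u" and NC: "NCat n \<sigma> u"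
    and a: "a \<in> {1..n}" and r: "reach (inv \<sigma> \<circ> longcyc n) a b"
  shows "a \<in> insert u (cint n u (\<sigma> u)) \<longleftrightarrow> b \<in> insert u (cint n u (\<sigma> u))"
proof (rule invariant_reach[OF rho_perm[OF P] _ _ a r])
  show "insert u (cint n u (\<sigma> u)) \<subseteq> {1..n}" using u unfolding cint_def by blast
  show "\<And>x. x \<in> insert u (cint n u (\<sigma> u)) \<Longrightarrow> (inv \<sigma> \<circ> longcyc n) x \<in> insert u (cint n u (\<sigma> u))"
    by (rule G_inv[OF P u nf NC])
qed

lemma funpow_fixed: "f x = x \<Longrightarrow> (f ^^ m) x = x"
  by (induction m) auto

lemma nc_orbit:
  assumes NC: "NCat n \<sigma> u" and b: "b \<in> cint n u (\<sigma> u)"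
  shows "(\<sigma> ^^ m) b \<in> cint n u (\<sigma> u)"
  using b by (induction m) (use NC in \<open>auto simp: NCat_def\<close>)



definition NC :: "nat \<Rightarrow> (nat \<Rightarrow> nat) \<Rightarrow> bool" where
  "NC n \<sigma> \<longleftrightarrow> (\<forall>u \<in> {1..n}. \<sigma> u \<noteq> u \<longrightarrow> NCat n \<sigma> u)"

definition LOW :: "nat \<Rightarrow> (nat \<Rightarrow> nat) \<Rightarrow> nat \<Rightarrow> bool" where
  "LOW n \<sigma> t \<longleftrightarrow> (\<forall>x \<in> {1..n}. \<sigma> x \<noteq> x \<longrightarrow> (\<exists>y. reach \<sigma> x y \<and> y \<le> t))"

lemma fix_lemma:
  assumes P: "\<sigma> permutes {1..n}" and a: "a \<in> {1..n}" and b: "b \<in> {1..n}" and ab: "a < b"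
    and nc: "NC n \<sigma>" and low: "LOW n \<sigma> t" and ta: "t \<le> a"
    and diff: "\<not> reach \<sigma> b a" and same: "reach (inv \<sigma> \<circ> longcyc n) a b"
  shows "\<sigma> b = b"
proof (rule ccontr)
  assume nb: "\<sigma> b \<noteq> b"
  obtain y where y: "reach \<sigma> b y" "y \<le> t" using low b nb unfolding LOW_def by blast
  have yS: "y \<in> {1..n}" using reach_in[OF P b y(1)] .
  have ya: "y \<noteq> a" using diff y(1) by blast
  define Bl where "Bl = {z \<in> {1..n}. reach \<sigma> b z \<and> z < a}"
  have yBl: "y \<in> Bl" using yS y ya ta Bl_def by auto
  have fin: "finite Bl" by (simp add: Bl_def)
  define u where "u = Max Bl"
  have uBl: "u \<in> Bl" using Max_in[OF fin] yBl u_def by blast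
  have umax: "z \<le> u" if "z \<in> Bl" for z using Max_ge[OF fin that] u_def by simp
  have uS: "u \<in> {1..n}" and ru: "reach \<sigma> b u" and ua: "u < a" using uBl Bl_def by auto
  have unf: "\<sigma> u \<noteq> u"
  proof
    assume fu: "\<sigma> u = u"
    have "reach \<sigma> u b" using reach_sym[OF P ru] .
    then obtain m where "(\<sigma> ^^ m) u = b" unfolding reach_def by blast
    then have "u = b" using funpow_fixed[of \<sigma> u m] fu by simp
    then show False using ua ab by simp
  qed
  define w where "w = \<sigma> u"
  have rw: "reach \<sigma> b w" using reach_step[OF ru] w_def by simp
  have wS: "w \<in> {1..n}" using permutes_in_image[OF P] uS w_def by simp
  have wa: "w \<noteq> a" using rw diff by blast
  have acint: "a \<in> cint n u w"
  proof (cases "w > a")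
    case True then show ?thesis using ua a unfolding cint_def by auto
  next
    case False
    then have "w < a" using wa by simp
    then have "w \<in> Bl" using wS rw Bl_def by simp
    then have "w \<le> u" using umax by simp
    then have "w < u" using unf w_def by simp
    then show ?thesis using ua a unfolding cint_def by auto
  qed
  have NCu: "NCat n \<sigma> u" using nc uS unf unfolding NC_def by blast
  have "b \<in> insert u (cint n u (\<sigma> u))"
    using G_iff[OF P uS unf NCu a same] acint w_def by simp
  then have bc: "b \<in> cint n u w" using ua ab w_def by auto
  obtain m where m: "(\<sigma> ^^ m) b = u" using ru reach_def by blast
  have "u \<in> cint n u w" using nc_orbit[OF NCu, of b m] bc m w_def by simp
  moreover have "u \<notin> cint n u w" unfolding cint_def by auto
  ultimately show False by simp
qed

lemma reach_mono_ins:
  assumes fb: "\<sigma> b = b" and r: "reach \<sigma> x y"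
  shows "reach (\<sigma> \<circ> transpose a b) x y"
proof -
  define \<sigma>' where "\<sigma>' = \<sigma> \<circ> transpose a b"
  have st: "reach \<sigma>' z (\<sigma> z)" for z
  proof (cases "z = a")
    case True
    have "reach \<sigma>' z (\<sigma>' (\<sigma>' z))" using reach_step[OF reach_one] .
    moreover have "\<sigma>' (\<sigma>' z) = \<sigma> z"
      using True fb by (cases "a = b") (auto simp: \<sigma>'_def)
    ultimately show ?thesis by simp
  next
    case False
    show ?thesis
    proof (cases "z = b")
      case True then show ?thesis using fb by simp
    next
      case False
      then have "\<sigma>' z = \<sigma> z" using \<open>z \<noteq> a\<close> by (simp add: \<sigma>'_def)
      then show ?thesis using reach_one[of \<sigma>' z] by simp
    qed
  qed
  have "reach \<sigma>' x ((\<sigma> ^^ m) x)" for m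
    by (induction m) (auto intro: reach_trans st)
  then show ?thesis using r reach_def \<sigma>'_def by metis
qed

lemma low_step:
  assumes P: "\<sigma> permutes {1..n}" and fb: "\<sigma> b = b" and low: "LOW n \<sigma> t" and ta: "t \<le> a"
  shows "LOW n (\<sigma> \<circ> transpose a b) a"
  unfolding LOW_def
proof (intro ballI impI)
  fix x assume x: "x \<in> {1..n}" and nf: "(\<sigma> \<circ> transpose a b) x \<noteq> x"
  define \<sigma>' where "\<sigma>' = \<sigma> \<circ> transpose a b"
  show "\<exists>y. reach (\<sigma> \<circ> transpose a b) x y \<and> y \<le> a"
  proof (cases "x = a")
    case True then show ?thesis by (intro exI[of _ a]) simp
  next
    case xa: False
    show ?thesis
    proof (cases "x = b")
      case True
      have "reach \<sigma> (\<sigma> a) a" using reach_sym[OF P reach_one] .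
      then have "reach \<sigma>' (\<sigma> a) a" using reach_mono_ins[where \<sigma>=\<sigma> and b=b, OF fb] \<sigma>'_def by simp
      moreover have "\<sigma>' b = \<sigma> a" by (simp add: \<sigma>'_def)
      ultimately have "reach \<sigma>' b a" using reach_trans[OF reach_one[of \<sigma>' b]] by simp
      then show ?thesis using True \<sigma>'_def by auto
    next
      case False
      then have "\<sigma> x \<noteq> x" using nf xa by simp
      then obtain y where "reach \<sigma> x y" "y \<le> t" using low x unfolding LOW_def by blast
      then show ?thesis using reach_mono_ins[where \<sigma>=\<sigma> and b=b, OF fb] ta by fastforce
    qed
  qed
qed



lemma arithA:
  assumes "a < z" "z < b" "v \<in> {1..n}" "v \<noteq> b" "v \<noteq> z" "v \<notin> cint n a b" "a \<in> {1..n}" "b \<in> {1..n}" "z \<in> {1..n}"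
  shows "(a \<in> insert z (cint n z v)) \<noteq> (b \<in> insert z (cint n z v))"
  using assms unfolding cint_def by auto

lemma arithB:
  assumes "a < b" "z \<in> cint n b a" "v \<in> {1..n}" "v \<noteq> a" "v \<noteq> b" "v \<noteq> z" "v \<notin> cint n b a" "a \<in> {1..n}" "b \<in> {1..n}"
  shows "(a \<in> insert z (cint n z v)) \<noteq> (b \<in> insert z (cint n z v))"
  using assms unfolding cint_def by (auto split: if_splits)

lemma arithC1:
  assumes "b \<in> cint n a w" "z \<in> cint n b w" "a \<noteq> w"
  shows "z \<in> cint n a w \<and> z \<noteq> a \<and> z \<noteq> b"
  using assms unfolding cint_def by (auto split: if_splits)

lemma arithC2:
  assumes "b \<in> cint n a w" "z \<in> cint n b w" "v \<in> cint n a w" "v \<noteq> b" "v \<notin> cint n b w" "v \<noteq> z" "a \<noteq> w"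
    "a \<in> {1..n}"
  shows "(a \<in> insert z (cint n z v)) \<noteq> (b \<in> insert z (cint n z v))"
  using assms unfolding cint_def by (auto split: if_splits)

lemma nc_step:
  assumes P: "\<sigma> permutes {1..n}" and a: "a \<in> {1..n}" and b: "b \<in> {1..n}" and ab: "a < b"
    and fb: "\<sigma> b = b" and nc: "NC n \<sigma>" and same: "reach (inv \<sigma> \<circ> longcyc n) a b"
  shows "NC n (\<sigma> \<circ> transpose a b)"
  unfolding NC_def
proof (intro ballI impI)
  define \<sigma>' where "\<sigma>' = \<sigma> \<circ> transpose a b"
  have s'a: "\<sigma>' a = b" and s'b: "\<sigma>' b = \<sigma> a" by (simp_all add: \<sigma>'_def fb)
  have s'o: "\<sigma>' z = \<sigma> z" if "z \<noteq> a" "z \<noteq> b" for z using that by (simp add: \<sigma>'_def)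
  have inj: "\<sigma> x = \<sigma> y \<longleftrightarrow> x = y" for x y using permutes_inj[OF P] by (simp add: inj_eq)
  have inS: "\<sigma> x \<in> {1..n}" if "x \<in> {1..n}" for x using permutes_in_image[OF P] that by simp
  have iffu: "a \<in> insert u (cint n u (\<sigma> u)) \<longleftrightarrow> b \<in> insert u (cint n u (\<sigma> u))"
    if "u \<in> {1..n}" "\<sigma> u \<noteq> u" for u
    using G_iff[OF P that _ a same] nc that unfolding NC_def by blast
  have NCu: "NCat n \<sigma> u" if "u \<in> {1..n}" "\<sigma> u \<noteq> u" for u using nc that unfolding NC_def by blast
  have sab: "\<sigma> a \<noteq> b" using fb inj ab by (metis less_irrefl)
  fix u assume uS: "u \<in> {1..n}" and unf: "(\<sigma> \<circ> transpose a b) u \<noteq> u"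
  show "NCat n (\<sigma> \<circ> transpose a b) u"
    unfolding NCat_def \<sigma>'_def[symmetric]
  proof
    fix z assume z: "z \<in> cint n u (\<sigma>' u)"
    have zS: "z \<in> {1..n}" using z unfolding cint_def by simp
    show "\<sigma>' z \<in> cint n u (\<sigma>' u)"
    proof (cases "u = a")
      case ua: True
      then have zab: "a < z" "z < b" using z s'a ab unfolding cint_def by auto
      then have zo: "\<sigma>' z = \<sigma> z" using s'o by simp
      show ?thesis
      proof (cases "\<sigma> z = z")
        case True then show ?thesis using z zo by simp
      next
        case False
        have "\<sigma> z \<noteq> b" using fb inj zab by (metis less_irrefl)
        moreover have "(a \<in> insert z (cint n z (\<sigma> z))) = (b \<in> insert z (cint n z (\<sigma> z)))"
          using iffu[OF zS False] .
        ultimately have "\<sigma> z \<in> cint n a b"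
          using arithA[OF zab inS[OF zS] _ False _ a b zS] by blast
        then show ?thesis using zo ua s'a by simp
      qed
    next
      case uNa: False
      show ?thesis
      proof (cases "u = b")
        case ub: True
        show ?thesis
        proof (cases "\<sigma> a = a")
          case fa: True
          have zc: "z \<in> cint n b a" using z ub s'b fa by simp
          have zab: "z \<noteq> a" "z \<noteq> b" using zc ab unfolding cint_def by auto
          then have zo: "\<sigma>' z = \<sigma> z" using s'o by simp
          show ?thesis
          proof (cases "\<sigma> z = z")
            case True then show ?thesis using z zo by simp
          next
            case False
            have "\<sigma> z \<noteq> b" using fb inj zab by metis
            moreover have "\<sigma> z \<noteq> a" using fa inj zab by metis
            moreover have "(a \<in> insert z (cint n z (\<sigma> z))) = (b \<in> insert z (cint n z (\<sigma> z)))"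
              using iffu[OF zS False] .
            ultimately have "\<sigma> z \<in> cint n b a"
              using arithB[OF ab zc inS[OF zS] _ _ False _ a b] by blast
            then show ?thesis using zo ub s'b fa by simp
          qed
        next
          case nfa: False
          define w where "w = \<sigma> a"
          have aw: "a \<noteq> w" using nfa w_def by simp
          have "b \<in> insert a (cint n a (\<sigma> a))" using iffu[OF a nfa] by simp
          then have bc: "b \<in> cint n a w" using ab w_def by auto
          have zc: "z \<in> cint n b w" using z ub s'b w_def by simp
          have zz: "z \<in> cint n a w" "z \<noteq> a" "z \<noteq> b" using arithC1[OF bc zc aw] by auto
          then have zo: "\<sigma>' z = \<sigma> z" using s'o by simp
          show ?thesis
          proof (cases "\<sigma> z = z")
            case True then show ?thesis using z zo by simp
          next
            case False
            have vc: "\<sigma> z \<in> cint n a w" using NCu[OF a nfa] zz(1) w_def unfolding NCat_def by blast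
            have "\<sigma> z \<noteq> b" using fb inj zz by metis
            moreover have "(a \<in> insert z (cint n z (\<sigma> z))) = (b \<in> insert z (cint n z (\<sigma> z)))"
              using iffu[OF zS False] .
            ultimately have "\<sigma> z \<in> cint n b w"
              using arithC2[OF bc zc vc _ _ False aw a] by blast
            then show ?thesis using zo ub s'b w_def by simp
          qed
        qed
      next
        case uNb: False
        have uo: "\<sigma>' u = \<sigma> u" using s'o uNa uNb by simp
        have unf': "\<sigma> u \<noteq> u" using unf uo \<sigma>'_def by simp
        have zc: "z \<in> cint n u (\<sigma> u)" using z uo by simp
        have bu: "b \<noteq> u" using uNb by simp
        show ?thesis
        proof (cases "z = a")
          case True
          then have "b \<in> insert u (cint n u (\<sigma> u))" using iffu[OF uS unf'] zc by simp
          then show ?thesis using True s'a uo bu by simp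
        next
          case zNa: False
          show ?thesis
          proof (cases "z = b")
            case True
            then have "a \<in> insert u (cint n u (\<sigma> u))" using iffu[OF uS unf'] zc by simp
            then have "a \<in> cint n u (\<sigma> u)" using uNa by simp
            then have "\<sigma> a \<in> cint n u (\<sigma> u)" using NCu[OF uS unf'] unfolding NCat_def by blast
            then show ?thesis using True s'b uo by simp
          next
            case False
            then have "\<sigma>' z = \<sigma> z" using s'o zNa by simp
            then show ?thesis using NCu[OF uS unf'] zc uo unfolding NCat_def by simp
          qed
        qed
      qed
    qed
  qed
qed



locale sstar =
  fixes n k :: nat and \<gamma> :: "(nat \<times> nat) list"
  assumes n1: "n \<ge> 1" and k1: "k \<ge> 1" and mem: "\<gamma> \<in> Sigma_star n k"
begin

abbreviation I where "I l \<equiv> fst (\<gamma> ! (l - 1))"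
abbreviation J where "J l \<equiv> snd (\<gamma> ! (l - 1))"
abbreviation g where "g l \<equiv> gam \<gamma> l"
abbreviation rho where "rho l \<equiv> inv (gam \<gamma> l) \<circ> longcyc n"

lemma len: "length \<gamma> = k" and trs: "\<forall>t \<in> set \<gamma>. is_transp n t" and plk: "plen n (tprod \<gamma>) = k"
  and pl: "ple n (tprod \<gamma>) (longcyc n)" and srt: "sorted (map fst \<gamma>)"
  using mem unfolding Sigma_star_def Sigma_n_def by auto

lemma tr:
  assumes "l \<in> {1..k}"
  shows "I l \<in> {1..n}" "J l \<in> {1..n}" "I l < J l"
proof -
  have "\<gamma> ! (l - 1) \<in> set \<gamma>" using assms len by (intro nth_mem) auto
  then have "is_transp n (\<gamma> ! (l - 1))" using trs by blast
  then show "I l \<in> {1..n}" "J l \<in> {1..n}" "I l < J l" unfolding is_transp_def by auto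
qed

lemma I_prev:
  assumes "l \<in> {1..k}"
  shows "I (l - 1) \<le> I l"
proof (cases "l = 1")
  case True then show ?thesis by simp
next
  case False
  have a1: "l - 2 \<le> l - 1" by simp
  have a2: "l - 1 < length (map fst \<gamma>)" using assms len by auto
  have "map fst \<gamma> ! (l - 2) \<le> map fst \<gamma> ! (l - 1)"
    using sorted_nth_mono[OF srt a1 a2] .
  then have "I (l - 1) \<le> I l" using a2 assms False by (simp add: numeral_2_eq_2)
  then show ?thesis .
qed

lemma gperm: "g l permutes {1..n}"
  unfolding gam_def using trs by (intro tprod_perm) (meson in_set_takeD)

lemma gstep:
  assumes "l \<in> {1..k}"
  shows "g l = g (l - 1) \<circ> transpose (I l) (J l)"
proof -
  have "l - 1 < length \<gamma>" using assms len by auto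
  from gam_Suc[OF this] have "g (Suc (l - 1)) = g (l - 1) \<circ> transpose (I l) (J l)" .
  moreover have "Suc (l - 1) = l" using assms by auto
  ultimately show ?thesis by simp
qed

lemma gk: "g k = tprod \<gamma>"
  using len by (simp add: gam_def)

lemma plen_g:
  assumes "l \<le> k"
  shows "plen n (g l) = l"
proof -
  have "plen n (g l \<circ> id) \<le> length (take l \<gamma>) + plen n id"
    unfolding gam_def using trs by (intro plen_tprod_left) (auto dest: in_set_takeD)
  then have 1: "plen n (g l) \<le> l" by simp
  have "plen n (g l \<circ> tprod (drop l \<gamma>)) \<le> plen n (g l) + length (drop l \<gamma>)"
    using trs gperm by (intro plen_tprod_right) (auto dest: in_set_dropD)
  then have "k \<le> plen n (g l) + (k - l)" using gam_drop[of \<gamma> l] plk len by simp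
  then show ?thesis using 1 assms by linarith
qed

lemma inv_g:
  assumes "l \<le> k"
  shows "inv (g l) = tprod (drop l \<gamma>) \<circ> inv (g k)"
proof -
  have "g l \<circ> (tprod (drop l \<gamma>) \<circ> inv (g k)) = g k \<circ> inv (g k)"
    using gam_drop[of \<gamma> l] gk by (simp add: comp_assoc)
  also have "\<dots> = id" using permutes_inv_o(1)[OF gperm] .
  finally have e: "g l \<circ> (tprod (drop l \<gamma>) \<circ> inv (g k)) = id" .
  have "inv (g l) = inv (g l) \<circ> (g l \<circ> (tprod (drop l \<gamma>) \<circ> inv (g k)))" using e by simp
  also have "\<dots> = (inv (g l) \<circ> g l) \<circ> (tprod (drop l \<gamma>) \<circ> inv (g k))" by (simp add: comp_assoc)
  also have "\<dots> = tprod (drop l \<gamma>) \<circ> inv (g k)" using permutes_inv_o(2)[OF gperm] by simp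
  finally show ?thesis .
qed

lemma plen_rho:
  assumes "l \<le> k"
  shows "plen n (rho l) + l = plen n (longcyc n)"
proof -
  have pk: "plen n (longcyc n) = k + plen n (rho k)"
    using pl plk gk unfolding ple_def by simp
  have "rho l = tprod (drop l \<gamma>) \<circ> rho k" using inv_g[OF assms] by (simp add: comp_assoc)
  moreover have "plen n (tprod (drop l \<gamma>) \<circ> rho k) \<le> length (drop l \<gamma>) + plen n (rho k)"
    using trs rho_perm[OF gperm] by (intro plen_tprod_left) (auto dest: in_set_dropD)
  ultimately have up: "plen n (rho l) \<le> (k - l) + plen n (rho k)" using len by simp
  have "g l \<circ> rho l = longcyc n" by (metis comp_assoc permutes_inv_o(1)[OF gperm] id_comp)
  then have "plen n (longcyc n) \<le> plen n (g l) + plen n (rho l)"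
    using triangle[OF gperm[of l] rho_perm[OF gperm[of l]]] by simp
  then show ?thesis using up pk plen_g[OF assms] assms by linarith
qed

lemma rho_step:
  assumes "l \<in> {1..k}"
  shows "rho l = transpose (I l) (J l) \<circ> rho (l - 1)"
proof -
  have "bij (g (l - 1))" using permutes_bij[OF gperm] .
  then have "inv (g l) = transpose (I l) (J l) \<circ> inv (g (l - 1))"
    using gstep[OF assms] o_inv_distrib[of "g (l - 1)" "transpose (I l) (J l)"] by simp
  then show ?thesis by (simp add: comp_assoc)
qed

lemma same:
  assumes l: "l \<in> {1..k}"
  shows "reach (rho (l - 1)) (I l) (J l)"
proof (rule ccontr)
  assume nr: "\<not> reach (rho (l - 1)) (I l) (J l)"
  have P: "rho (l - 1) permutes {1..n}" using rho_perm[OF gperm] .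
  have "\<not> reach (rho (l - 1)) (J l) (I l)" using nr reach_sym[OF P] by blast
  then have "plen n (transpose (I l) (J l) \<circ> rho (l - 1)) = plen n (rho (l - 1)) + 1"
    using tr[OF l] by (intro plen_left_merge[OF P]) auto
  then have "plen n (rho l) = plen n (rho (l - 1)) + 1" using rho_step[OF l] by simp
  moreover have "plen n (rho l) + l = plen n (longcyc n)" by (rule plen_rho) (use l in auto)
  moreover have "plen n (rho (l - 1)) + (l - 1) = plen n (longcyc n)" by (rule plen_rho) (use l in auto)
  ultimately show False using l by simp
qed

lemma diff:
  assumes l: "l \<in> {1..k}"
  shows "\<not> reach (g (l - 1)) (J l) (I l)"
proof
  assume r: "reach (g (l - 1)) (J l) (I l)"
  have "plen n (g (l - 1) \<circ> transpose (I l) (J l)) + 1 \<le> plen n (g (l - 1))"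
    using tr[OF l] by (intro plen_right_split[OF gperm _ _ _ r]) auto
  then have "plen n (g l) + 1 \<le> plen n (g (l - 1))" using gstep[OF l] by simp
  moreover have "plen n (g l) = l" by (rule plen_g) (use l in auto)
  moreover have "plen n (g (l - 1)) = l - 1" by (rule plen_g) (use l in auto)
  ultimately show False using l by simp
qed

lemma inv_all:
  "p \<le> k \<Longrightarrow> NC n (g p) \<and> LOW n (g p) (I p) \<and> (\<forall>l \<in> {1..p}. g (l - 1) (J l) = J l)"
proof (induction p)
  case 0
  show ?case by (simp add: NC_def LOW_def)
next
  case (Suc p)
  define l where "l = Suc p"
  have l: "l \<in> {1..k}" using Suc.prems l_def by simp
  have IH: "NC n (g p)" "LOW n (g p) (I p)" "\<forall>l \<in> {1..p}. g (l - 1) (J l) = J l"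
    using Suc by auto
  have tI: "I p \<le> I l" using I_prev[OF l] by (simp add: l_def)
  have df: "\<not> reach (g p) (J l) (I l)" using diff[OF l] by (simp add: l_def)
  have sm: "reach (rho p) (I l) (J l)" using same[OF l] by (simp add: l_def)
  have fx: "g p (J l) = J l"
    by (rule fix_lemma[OF gperm tr(1)[OF l] tr(2)[OF l] tr(3)[OF l] IH(1) IH(2) tI df sm])
  have gl: "g l = g p \<circ> transpose (I l) (J l)" using gstep[OF l] by (simp add: l_def)
  have "NC n (g l)" unfolding gl by (rule nc_step[OF gperm tr(1)[OF l] tr(2)[OF l] tr(3)[OF l] fx IH(1) sm])
  moreover have "LOW n (g l) (I l)" unfolding gl by (rule low_step[OF gperm fx IH(2) tI])
  moreover have "\<forall>l' \<in> {1..l}. g (l' - 1) (J l') = J l'"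
  proof
    fix l' assume l': "l' \<in> {1..l}"
    show "g (l' - 1) (J l') = J l'"
    proof (cases "l' = l")
      case True then show ?thesis using fx by (simp add: l_def)
    next
      case False then show ?thesis using IH(3) l' l_def by auto
    qed
  qed
  ultimately show ?case using l_def by simp
qed

lemma fixJ: "l \<in> {1..k} \<Longrightarrow> g (l - 1) (J l) = J l"
  using inv_all[of l] by auto

lemma part3:
  assumes l: "l \<in> {1..k}"
  shows "g l (I l) = J l \<and> g l (J l) = g (l - 1) (I l) \<and> (\<forall>x. x \<notin> {I l, J l} \<longrightarrow> g l x = g (l - 1) x)"
  using gstep[OF l] fixJ[OF l] by simp

lemma part4:
  "m \<le> k \<Longrightarrow> {x. g m x \<noteq> x} = (\<Union>l \<in> {1..m}. {I l, J l})"
proof (induction m)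
  case 0
  show ?case by simp
next
  case (Suc m)
  define l where "l = Suc m"
  have l: "l \<in> {1..k}" using Suc.prems l_def by simp
  have lm: "l - 1 = m" using l_def by simp
  have IH: "{x. g m x \<noteq> x} = (\<Union>l \<in> {1..m}. {I l, J l})" using Suc by simp
  have p3: "g l (I l) = J l" "g l (J l) = g m (I l)" "\<And>x. x \<notin> {I l, J l} \<Longrightarrow> g l x = g m x"
    using part3[OF l] lm by auto
  have fx: "g m (J l) = J l" using fixJ[OF l] lm by simp
  have ij: "I l \<noteq> J l" using tr(3)[OF l] by simp
  have "g m (I l) \<noteq> J l"
  proof
    assume "g m (I l) = J l"
    then have "g m (I l) = g m (J l)" using fx by simp
    then show False using permutes_inj[OF gperm] ij by (metis injD)
  qed
  have "g l x \<noteq> x \<longleftrightarrow> g m x \<noteq> x \<or> x \<in> {I l, J l}" for x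
  proof (cases "x = I l")
    case True then show ?thesis using p3(1) ij by simp
  next
    case xI: False
    show ?thesis
    proof (cases "x = J l")
      case True then show ?thesis using p3(2) \<open>g m (I l) \<noteq> J l\<close> by simp
    next
      case False then show ?thesis using p3(3)[of x] xI by simp
    qed
  qed
  then have "{x. g l x \<noteq> x} = {x. g m x \<noteq> x} \<union> {I l, J l}" by auto
  also have "\<dots> = {I l, J l} \<union> (\<Union>l'\<in>{1..m}. {I l', J l'})" unfolding IH by blast
  also have "\<dots> = (\<Union>l'\<in>insert l {1..m}. {I l', J l'})" by (simp only: UN_insert)
  also have "insert l {1..m} = {1..l}" using l_def by auto
  finally show ?case using l_def by simp
qed

lemma part1: "inj_on J {1..k}"
proof -
  have key: "J l \<noteq> J l'" if "l \<in> {1..k}" "l' \<in> {1..k}" "l' < l" for l l'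
  proof
    assume e: "J l = J l'"
    have "J l' \<in> {x. g (l - 1) x \<noteq> x}"
      using part4[of "l - 1"] that by auto
    then show False using fixJ[OF that(1)] e by simp
  qed
  show ?thesis
    by (rule inj_onI) (metis key linorder_neqE_nat)
qed

end


theorem lemma3p4:
  fixes n k :: nat and \<gamma> :: "(nat \<times> nat) list"
  assumes "n \<ge> 1" and "k \<ge> 1" and "\<gamma> \<in> Sigma_star n k"
  defines "i \<equiv> \<lambda>l. fst (\<gamma> ! (l - 1))" and "j \<equiv> \<lambda>l. snd (\<gamma> ! (l - 1))"
  shows "inj_on j {1..k}
    \<and> (\<forall>l \<in> {1..k}. gam \<gamma> (l - 1) (j l) = j l)
    \<and> (\<forall>l \<in> {1..k}. gam \<gamma> l (i l) = j l \<and> gam \<gamma> l (j l) = gam \<gamma> (l - 1) (i l)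
            \<and> (\<forall>x. x \<notin> {i l, j l} \<longrightarrow> gam \<gamma> l x = gam \<gamma> (l - 1) x))
    \<and> (\<forall>m \<in> {1..k}. {x. gam \<gamma> m x \<noteq> x} = (\<Union>l \<in> {1..m}. {i l, j l}))"
proof -
  interpret sstar n k \<gamma> using assms(1-3) by unfold_locales
  have 1: "inj_on j {1..k}" unfolding j_def using part1 by simp
  have 2: "\<forall>l \<in> {1..k}. gam \<gamma> (l - 1) (j l) = j l" unfolding j_def using fixJ by simp
  have 3: "\<forall>l \<in> {1..k}. gam \<gamma> l (i l) = j l \<and> gam \<gamma> l (j l) = gam \<gamma> (l - 1) (i l)
            \<and> (\<forall>x. x \<notin> {i l, j l} \<longrightarrow> gam \<gamma> l x = gam \<gamma> (l - 1) x)"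
    unfolding i_def j_def using part3 by blast
  have 4: "\<forall>m \<in> {1..k}. {x. gam \<gamma> m x \<noteq> x} = (\<Union>l \<in> {1..m}. {i l, j l})"
    unfolding i_def j_def using part4 by simp
  show ?thesis using 1 2 3 4 by blast
qed

end
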